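(* Let $\Gamma$ be a finite connected graph and let $\Sigma$ be a motif in $\Gamma$ with vertices $p_1,\dots,p_m$. Suppose that $1$ is an eigenvalue of the normalized Laplacian of the graph $\Sigma$, with eigenfunction $f^\Sigma$. Let $\Gamma^\Sigma$ be the graph obtained from $\Gamma$ by adding new vertices $q_1,\dots,q_m$, joining $q_\alpha$ and $q_\beta$ by an edge whenever $p_\alpha\sim p_\beta$, and joining each $q_\alpha$ by an edge to every vertex $p\notin\Sigma$ that is a neighbor of $p_\alpha$ in $\Gamma$. Then $1$ is an eigenvalue of the normalized Laplacian of $\Gamma^\Sigma$, with an eigenfunction that vanishes at every vertex other than $p_1,\dots,p_m,q_1,\dots,q_m$.
   Context: For a finite simple graph without isolated vertices, write $i\sim j$ for adjacency and $n_i$ for the degree of $i$. The normalized Laplacian acts on real functions $v$ on the vertices by $\Delta v(i)=v(i)-\frac{1}{n_i}\sum_{j\sim i}v(j)$; $\lambda$ is an eigenvalue with eigenfunction $u$ if $u\not\equiv 0$ and $\frac{1}{n_i}\sum_{j\sim i}u(j)=(1-\lambda)u(i)$ for all $i$. A motif in $\Gamma$ is a connected subgraph $\Sigma$ of $\Gamma$ containing all edges of $\Gamma$ between its vertices (i.e. a connected induced subgraph). *)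

theory Defs
  imports Complex_Main
begin

definition simple_graph :: "'a set \<Rightarrow> ('a \<Rightarrow> 'a \<Rightarrow> bool) \<Rightarrow> bool" where
  "simple_graph V E \<longleftrightarrow> finite V \<and> (\<forall>a b. E a b \<longrightarrow> a \<in> V \<and> b \<in> V)
     \<and> (\<forall>a b. E a b \<longrightarrow> E b a) \<and> (\<forall>a. \<not> E a a)"

definition no_isolated :: "'a set \<Rightarrow> ('a \<Rightarrow> 'a \<Rightarrow> bool) \<Rightarrow> bool" where
  "no_isolated V E \<longleftrightarrow> (\<forall>i\<in>V. \<exists>j\<in>V. E i j)"

definition connected_graph :: "'a set \<Rightarrow> ('a \<Rightarrow> 'a \<Rightarrow> bool) \<Rightarrow> bool" where
  "connected_graph V E \<longleftrightarrow> V \<noteq> {} \<and> (\<forall>a\<in>V. \<forall>b\<in>V. E\<^sup>*\<^sup>* a b)"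

definition nbrs :: "'a set \<Rightarrow> ('a \<Rightarrow> 'a \<Rightarrow> bool) \<Rightarrow> 'a \<Rightarrow> 'a set" where
  "nbrs V E i = {j \<in> V. E i j}"

definition degree :: "'a set \<Rightarrow> ('a \<Rightarrow> 'a \<Rightarrow> bool) \<Rightarrow> 'a \<Rightarrow> nat" where
  "degree V E i = card (nbrs V E i)"

definition is_eigenfunction ::
  "'a set \<Rightarrow> ('a \<Rightarrow> 'a \<Rightarrow> bool) \<Rightarrow> real \<Rightarrow> ('a \<Rightarrow> real) \<Rightarrow> bool" where
  "is_eigenfunction V E lam u \<longleftrightarrow> simple_graph V E \<and> no_isolated V E
     \<and> (\<exists>i\<in>V. u i \<noteq> 0)
     \<and> (\<forall>i\<in>V. (1 / real (degree V E i)) * (\<Sum>j\<in>nbrs V E i. u j) = (1 - lam) * u i)"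

definition is_eigenvalue :: "'a set \<Rightarrow> ('a \<Rightarrow> 'a \<Rightarrow> bool) \<Rightarrow> real \<Rightarrow> bool" where
  "is_eigenvalue V E lam \<longleftrightarrow> (\<exists>u. is_eigenfunction V E lam u)"

definition induced :: "'a set \<Rightarrow> ('a \<Rightarrow> 'a \<Rightarrow> bool) \<Rightarrow> 'a \<Rightarrow> 'a \<Rightarrow> bool" where
  "induced S E a b \<longleftrightarrow> a \<in> S \<and> b \<in> S \<and> E a b"

definition motif :: "'a set \<Rightarrow> ('a \<Rightarrow> 'a \<Rightarrow> bool) \<Rightarrow> 'a set \<Rightarrow> bool" where
  "motif V E S \<longleftrightarrow> S \<subseteq> V \<and> connected_graph S (induced S E)"

text \<open>The graph Gamma^Sigma: old vertices Inl v (v in V), new vertices Inr p (copy q of p in S).\<close>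
definition dup_vertices :: "'a set \<Rightarrow> 'a set \<Rightarrow> ('a + 'a) set" where
  "dup_vertices V S = Inl ` V \<union> Inr ` S"

fun dup_edges :: "'a set \<Rightarrow> ('a \<Rightarrow> 'a \<Rightarrow> bool) \<Rightarrow> 'a set \<Rightarrow> 'a + 'a \<Rightarrow> 'a + 'a \<Rightarrow> bool" where
  "dup_edges V E S (Inl a) (Inl b) = E a b"
| "dup_edges V E S (Inr a) (Inr b) = (a \<in> S \<and> b \<in> S \<and> E a b)"
| "dup_edges V E S (Inr a) (Inl p) = (a \<in> S \<and> p \<in> V \<and> p \<notin> S \<and> E a p)"
| "dup_edges V E S (Inl p) (Inr a) = (a \<in> S \<and> p \<in> V \<and> p \<notin> S \<and> E a p)"

end

theory Submission
  imports Defs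
begin

lemma nbrs_Inl:
  "nbrs (dup_vertices V S) (dup_edges V E S) (Inl v)
   = Inl ` {w\<in>V. E v w} \<union> Inr ` {a\<in>S. v\<in>V \<and> v\<notin>S \<and> E a v}"
  unfolding nbrs_def dup_vertices_def
  apply (rule set_eqI)
  subgoal for x by (cases x) auto
  done

lemma nbrs_Inr:
  "a \<in> S \<Longrightarrow> nbrs (dup_vertices V S) (dup_edges V E S) (Inr a)
   = Inl ` {p\<in>V. p\<notin>S \<and> E a p} \<union> Inr ` {b\<in>S. E a b}"
  unfolding nbrs_def dup_vertices_def
  apply (rule set_eqI)
  subgoal for x by (cases x) auto
  done

lemma sum_split:
  assumes "finite A" "finite B"
  shows "(\<Sum>x\<in>Inl ` A \<union> Inr ` B. g x) = (\<Sum>a\<in>A. g (Inl a)) + (\<Sum>b\<in>B. g (Inr b))"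
proof -
  have "(\<Sum>x\<in>Inl ` A \<union> Inr ` B. g x) = (\<Sum>x\<in>Inl ` A. g x) + (\<Sum>x\<in>Inr ` B. g x)"
    by (rule sum.union_disjoint) (use assms in auto)
  also have "\<dots> = (\<Sum>a\<in>A. g (Inl a)) + (\<Sum>b\<in>B. g (Inr b))"
    by (simp add: sum.reindex)
  finally show ?thesis .
qed

theorem theorem1:
  fixes V :: "'a set" and E :: "'a \<Rightarrow> 'a \<Rightarrow> bool" and S :: "'a set" and f :: "'a \<Rightarrow> real"
  assumes "simple_graph V E" and "no_isolated V E" and "connected_graph V E"
    and "motif V E S"
    and "is_eigenfunction S (induced S E) 1 f"
  shows "\<exists>g. is_eigenfunction (dup_vertices V S) (dup_edges V E S) 1 g
           \<and> (\<forall>x \<in> dup_vertices V S. x \<notin> Inl ` S \<union> Inr ` S \<longrightarrow> g x = 0)"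
proof -
  define g where "g = case_sum (\<lambda>p. if p\<in>S then f p else 0) (\<lambda>p. if p\<in>S then - f p else 0)"
  have fin: "finite V" and ed: "\<And>a b. E a b \<Longrightarrow> a \<in> V \<and> b \<in> V"
    and sym: "\<And>a b. E a b \<Longrightarrow> E b a" and irr: "\<And>a. \<not> E a a"
    using assms(1) unfolding simple_graph_def by auto
  have SV: "S \<subseteq> V" using assms(4) unfolding motif_def by auto
  have finS: "finite S" using fin SV finite_subset by blast
  have ef: "\<exists>i\<in>S. f i \<noteq> 0"
    and eq: "\<And>i. i\<in>S \<Longrightarrow> (1 / real (degree S (induced S E) i)) * (\<Sum>j\<in>nbrs S (induced S E) i. f j) = 0"
    and ni: "no_isolated S (induced S E)"
    using assms(5) unfolding is_eigenfunction_def by auto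
  have sumf: "(\<Sum>j\<in>{w\<in>S. E i w}. f j) = 0" if "i \<in> S" for i
  proof -
    have N: "nbrs S (induced S E) i = {w\<in>S. E i w}"
      using that unfolding nbrs_def induced_def by auto
    have "{w\<in>S. E i w} \<noteq> {}" using ni that unfolding no_isolated_def induced_def by auto
    moreover have "finite {w\<in>S. E i w}" using finS by auto
    ultimately have "card {w\<in>S. E i w} > 0" by (simp add: card_gt_0_iff)
    thus ?thesis using eq[OF that] unfolding degree_def N by simp
  qed
  have simp: "simple_graph (dup_vertices V S) (dup_edges V E S)"
  proof -
    have a1: "finite (Inl ` V \<union> Inr ` S)" using fin finS by auto
    have a2: "dup_edges V E S a b \<Longrightarrow> a \<in> Inl ` V \<union> Inr ` S \<and> b \<in> Inl ` V \<union> Inr ` S" for a b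
      using ed SV by (cases a; cases b) auto
    have a3: "dup_edges V E S a b \<Longrightarrow> dup_edges V E S b a" for a b
      using sym by (cases a; cases b) auto
    have a4: "\<not> dup_edges V E S a a" for a using irr by (cases a) auto
    show ?thesis unfolding simple_graph_def dup_vertices_def using a1 a2 a3 a4 by blast
  qed
  have noi: "no_isolated (dup_vertices V S) (dup_edges V E S)"
    unfolding no_isolated_def
  proof
    fix i assume i: "i \<in> dup_vertices V S"
    show "\<exists>j\<in>dup_vertices V S. dup_edges V E S i j"
    proof (cases i)
      case (Inl v)
      then have "v \<in> V" using i unfolding dup_vertices_def by auto
      then obtain w where "w \<in> V" "E v w" using assms(2) unfolding no_isolated_def by auto
      thus ?thesis using Inl unfolding dup_vertices_def by (intro bexI[of _ "Inl w"]) auto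
    next
      case (Inr a)
      then have "a \<in> S" using i unfolding dup_vertices_def by auto
      then obtain b where "b \<in> S" "E a b" using ni unfolding no_isolated_def induced_def by auto
      thus ?thesis using Inr \<open>a\<in>S\<close> unfolding dup_vertices_def by (intro bexI[of _ "Inr b"]) auto
    qed
  qed
  have zero: "(\<Sum>j\<in>nbrs (dup_vertices V S) (dup_edges V E S) i. g j) = 0"
    if i: "i \<in> dup_vertices V S" for i
  proof (cases i)
    case (Inl v)
    have fA: "finite {w\<in>V. E v w}" using fin by auto
    have fB: "finite {a\<in>S. v\<in>V \<and> v\<notin>S \<and> E a v}" using finS by auto
    have s1: "(\<Sum>w\<in>{w\<in>V. E v w}. g (Inl w)) = (\<Sum>w\<in>{w\<in>S. E v w}. f w)"
    proof -
      have "(\<Sum>w\<in>{w\<in>V. E v w}. g (Inl w)) = (\<Sum>w\<in>{w\<in>V. E v w}. if w \<in> S then f w else 0)"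
        by (simp add: g_def)
      also have "\<dots> = (\<Sum>w\<in>{w\<in>V. E v w} \<inter> {w. w\<in>S}. f w)"
        using fA by (simp add: sum.inter_restrict)
      also have "{w\<in>V. E v w} \<inter> {w. w\<in>S} = {w\<in>S. E v w}" using SV by auto
      finally show ?thesis .
    qed
    show ?thesis
    proof (cases "v \<in> S")
      case True
      have e: "{a\<in>S. v\<in>V \<and> v\<notin>S \<and> E a v} = {}" using True by auto
      show ?thesis using Inl sum_split[OF fA fB, of g] s1 sumf[OF True]
        by (simp add: nbrs_Inl e)
    next
      case False
      have v: "v \<in> V" using i Inl False unfolding dup_vertices_def by auto
      have B: "{a\<in>S. v\<in>V \<and> v\<notin>S \<and> E a v} = {w\<in>S. E v w}" using v False sym by blast
      have s2: "(\<Sum>b\<in>{w\<in>S. E v w}. g (Inr b)) = - (\<Sum>w\<in>{w\<in>S. E v w}. f w)"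
        by (simp add: g_def sum_negf)
      show ?thesis using Inl sum_split[OF fA fB, of g] s1 s2 B
        by (simp add: nbrs_Inl)
    qed
  next
    case (Inr a)
    have a: "a \<in> S" using i Inr unfolding dup_vertices_def by auto
    have fA: "finite {p\<in>V. p\<notin>S \<and> E a p}" using fin by auto
    have fB: "finite {b\<in>S. E a b}" using finS by auto
    have s1: "(\<Sum>p\<in>{p\<in>V. p\<notin>S \<and> E a p}. g (Inl p)) = 0" by (simp add: g_def)
    have s2: "(\<Sum>b\<in>{b\<in>S. E a b}. g (Inr b)) = - (\<Sum>w\<in>{w\<in>S. E a w}. f w)"
      by (simp add: g_def sum_negf)
    show ?thesis using Inr sum_split[OF fA fB, of g] s1 s2 sumf[OF a] a
      by (simp add: nbrs_Inr)
  qed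
  have "is_eigenfunction (dup_vertices V S) (dup_edges V E S) 1 g"
    unfolding is_eigenfunction_def
  proof (intro conjI simp noi ballI)
    obtain i where "i \<in> S" "f i \<noteq> 0" using ef by auto
    thus "\<exists>i\<in>dup_vertices V S. g i \<noteq> 0" using SV unfolding dup_vertices_def g_def
      by (intro bexI[of _ "Inl i"]) auto
  next
    fix i assume "i \<in> dup_vertices V S"
    thus "1 / real (degree (dup_vertices V S) (dup_edges V E S) i) *
          (\<Sum>j\<in>nbrs (dup_vertices V S) (dup_edges V E S) i. g j) = (1 - 1) * g i"
      using zero by simp
  qed
  moreover have "\<forall>x \<in> dup_vertices V S. x \<notin> Inl ` S \<union> Inr ` S \<longrightarrow> g x = 0"
  proof (intro ballI impI)
    fix x assume "x \<notin> Inl ` S \<union> Inr ` S"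
    thus "g x = 0" unfolding g_def by (cases x) auto
  qed
  ultimately show ?thesis by blast
qed

end
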